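(* For all positive integers $\alpha,\beta,p$, $$C(\alpha,\beta,p)\ge\max\left\{\frac{C(\alpha,1,p)}{\beta},\frac{C(1,\beta,p)}{\alpha}\right\}.$$
   Context: Memory cells are binary; cell-state vectors of $n$ cells lie in $\{0,1\}^n$. A code on $n$ cells consists, for each write $i\ge1$, of a real $R_i\ge0$, an encoder $\mathcal{E}_i:\{1,\ldots,\lfloor2^{nR_i}\rfloor\}\times\{0,1\}^n\to\{0,1\}^n$ and decoder $\mathcal{D}_i$ with $\mathcal{D}_i(\mathcal{E}_i(m,\mathbf{u}))=m$ (both may depend on $i$). Starting from $\mathbf{v}_0=\mathbf{0}$, messages produce states $\mathbf{v}_i=\mathcal{E}_i(m_i,\mathbf{v}_{i-1})$. The code is $(\alpha,\beta,p)$-constrained if for every message sequence, every $i\ge0$ and every $1\le j\le n-\beta+1$, $|\{(k,\ell): v_{i+k,j+\ell}\ne v_{i+k+1,j+\ell}, 0\le k<\alpha, 0\le\ell<\beta\}|\le p$ (total rewrite cost, measured by Hamming distance between consecutive states, of any $\beta$ contiguous cells over any $\alpha$ consecutive rewrites is at most $p$). Rate: $\lim_{m\to\infty}\frac1m\sum_{i=1}^mR_i$. $C_n(\alpha,\beta,p)$ is the supremum of rates of $(\alpha,\beta,p)$-constrained codes on $n$ cells and $C(\alpha,\beta,p)=\lim_{n\to\infty}C_n(\alpha,\beta,p)$. *)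

theory Defs
  imports Complex_Main
begin

text \<open>Cell-state vectors of n binary cells are modelled as functions nat \<Rightarrow> bool
  (cell j, 0-indexed) that are False at every index j \<ge> n.\<close>

definition states :: "nat \<Rightarrow> (nat \<Rightarrow> bool) set" where
  "states n = {v. \<forall>j\<ge>n. \<not> v j}"

definition nmsg :: "nat \<Rightarrow> real \<Rightarrow> nat" where
  "nmsg n r = nat \<lfloor>2 powr (real n * r)\<rfloor>"

definition is_code :: "nat \<Rightarrow> (nat \<Rightarrow> real) \<Rightarrow> (nat \<Rightarrow> nat \<Rightarrow> (nat \<Rightarrow> bool) \<Rightarrow> (nat \<Rightarrow> bool))
    \<Rightarrow> (nat \<Rightarrow> (nat \<Rightarrow> bool) \<Rightarrow> nat) \<Rightarrow> bool" where
  "is_code n R E D \<longleftrightarrow>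
     (\<forall>i\<ge>1. R i \<ge> 0 \<and>
        (\<forall>m \<in> {1..nmsg n (R i)}. \<forall>u \<in> states n. E i m u \<in> states n \<and> D i (E i m u) = m))"

fun state_seq :: "(nat \<Rightarrow> nat \<Rightarrow> (nat \<Rightarrow> bool) \<Rightarrow> (nat \<Rightarrow> bool)) \<Rightarrow> (nat \<Rightarrow> nat) \<Rightarrow> nat \<Rightarrow> (nat \<Rightarrow> bool)" where
  "state_seq E ms 0 = (\<lambda>_. False)"
| "state_seq E ms (Suc i) = E (Suc i) (ms (Suc i)) (state_seq E ms i)"

definition constrained :: "nat \<Rightarrow> nat \<Rightarrow> nat \<Rightarrow> nat \<Rightarrow> (nat \<Rightarrow> real)
    \<Rightarrow> (nat \<Rightarrow> nat \<Rightarrow> (nat \<Rightarrow> bool) \<Rightarrow> (nat \<Rightarrow> bool)) \<Rightarrow> bool" where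
  "constrained n \<alpha> \<beta> p R E \<longleftrightarrow>
     (\<forall>ms. (\<forall>i\<ge>1. ms i \<in> {1..nmsg n (R i)}) \<longrightarrow>
        (\<forall>i j. j + \<beta> \<le> n \<longrightarrow>
           card {(k, l). k < \<alpha> \<and> l < \<beta> \<and>
                 state_seq E ms (i + k) (j + l) \<noteq> state_seq E ms (i + k + 1) (j + l)} \<le> p))"

definition has_rate :: "(nat \<Rightarrow> real) \<Rightarrow> real \<Rightarrow> bool" where
  "has_rate R r \<longleftrightarrow> (\<lambda>m. (\<Sum>i=1..m. R i) / real m) \<longlonglongrightarrow> r"

definition Cn :: "nat \<Rightarrow> nat \<Rightarrow> nat \<Rightarrow> nat \<Rightarrow> real" where
  "Cn \<alpha> \<beta> p n = Sup {r. \<exists>R E D. is_code n R E D \<and> constrained n \<alpha> \<beta> p R E \<and> has_rate R r}"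

definition Ccap :: "nat \<Rightarrow> nat \<Rightarrow> nat \<Rightarrow> real" where
  "Ccap \<alpha> \<beta> p = lim (\<lambda>n. Cn \<alpha> \<beta> p n)"

end

theory Submission
  imports Defs "HOL-Analysis.Analysis"
begin


lemma nmsg_zero[simp]: "nmsg n 0 = 1"
  by (simp add: nmsg_def)

lemma nmsg_ge1: "r \<ge> 0 \<Longrightarrow> nmsg n r \<ge> 1"
proof -
  assume "r \<ge> 0"
  hence "2 powr (real n * r) \<ge> 1" by (simp add: ge_one_powr_ge_zero)
  thus ?thesis unfolding nmsg_def by linarith
qed

lemma states_card: "card (states n) \<le> 2 ^ n" and states_finite: "finite (states n)"
proof -
  have sub: "states n \<subseteq> (\<lambda>S j. j \<in> S) ` Pow {..<n}"
  proof
    fix v assume "v \<in> states n"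
    hence "{j. v j} \<in> Pow {..<n}" by (auto simp: states_def not_le[symmetric])
    moreover have "v = (\<lambda>j. j \<in> {j. v j})" by auto
    ultimately show "v \<in> (\<lambda>S j. j \<in> S) ` Pow {..<n}" by blast
  qed
  have "card ((\<lambda>S j. j \<in> S) ` Pow {..<n}) \<le> 2 ^ n"
    using card_image_le[of "Pow {..<n}" "\<lambda>S j. j \<in> S"] by (simp add: card_Pow)
  thus "card (states n) \<le> 2 ^ n" using sub card_mono by (meson finite_Pow_iff finite_imageI finite_lessThan order_trans)
  show "finite (states n)" using sub finite_subset by blast
qed

lemma zero_in_states[simp]: "(\<lambda>_. False) \<in> states n"
  by (simp add: states_def)

lemma nmsg_le_states:
  assumes "is_code n R E D" "i \<ge> 1"
  shows "nmsg n (R i) \<le> 2 ^ n"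
proof -
  let ?f = "\<lambda>m. E i m (\<lambda>_. False)"
  have inj: "inj_on ?f {1..nmsg n (R i)}"
    by (rule inj_onI) (metis assms is_code_def zero_in_states)
  have "?f ` {1..nmsg n (R i)} \<subseteq> states n" using assms by (auto simp: is_code_def)
  hence "card (?f ` {1..nmsg n (R i)}) \<le> card (states n)" by (simp add: card_mono states_finite)
  with card_image[OF inj] states_card[of n] show ?thesis by simp
qed

lemma R_le2:
  assumes "is_code n R E D" "i \<ge> 1" "n \<ge> 1"
  shows "R i \<le> 2"
proof (rule ccontr)
  assume "\<not> R i \<le> 2"
  hence "real n * R i \<ge> real n * 2" using assms(3) by simp
  moreover have "real n * 2 \<ge> real n + 1" using assms(3) by simp
  ultimately have "real n * R i \<ge> real n + 1" by linarith
  hence "2 powr (real n * R i) \<ge> 2 powr (real n + 1)" by simp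
  also have "2 powr (real n + 1) = 2 * 2 ^ n" by (simp add: powr_add powr_realpow)
  finally have "real (nmsg n (R i)) \<ge> 2 * 2 ^ n - 1" unfolding nmsg_def by linarith
  moreover have "real (nmsg n (R i)) \<le> 2 ^ n" using nmsg_le_states[OF assms(1,2)]
    by (metis of_nat_le_iff of_nat_numeral of_nat_power)
  moreover have "(2::real) \<le> 2 ^ n" using power_increasing[of 1 n "2::real"] assms(3) by simp
  ultimately show False by linarith
qed

definition RS :: "nat \<Rightarrow> nat \<Rightarrow> nat \<Rightarrow> nat \<Rightarrow> real set" where
  "RS \<alpha> \<beta> p n = {r. \<exists>R E D. is_code n R E D \<and> constrained n \<alpha> \<beta> p R E \<and> has_rate R r}"

lemma Cn_RS: "Cn \<alpha> \<beta> p n = Sup (RS \<alpha> \<beta> p n)"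
  by (simp add: Cn_def RS_def)

lemma avg_bounds:
  assumes "\<forall>i\<ge>1. a \<le> R i \<and> R i \<le> b" "n \<ge> 1"
  shows "a \<le> (\<Sum>i=1..n. R i) / real n \<and> (\<Sum>i=1..n. R i) / real n \<le> b"
proof -
  have "(\<Sum>i=1..n. R i) \<le> of_nat (card {1..n}) * b"
    by (rule sum_bounded_above) (use assms in auto)
  moreover have "(\<Sum>i=1..n. R i) \<ge> of_nat (card {1..n}) * a"
    by (rule sum_bounded_below) (use assms in auto)
  ultimately show ?thesis using assms(2) by (simp add: field_simps)
qed

lemma rate_bounds:
  assumes "has_rate R r" "\<forall>i\<ge>1. a \<le> R i \<and> R i \<le> b"
  shows "a \<le> r \<and> r \<le> b"
proof -
  have L: "(\<lambda>m. (\<Sum>i=1..m. R i) / real m) \<longlonglongrightarrow> r" using assms(1) by (simp add: has_rate_def)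
  have A: "\<forall>n\<ge>1. a \<le> (\<Sum>i=1..n. R i) / real n \<and> (\<Sum>i=1..n. R i) / real n \<le> b"
    using avg_bounds[OF assms(2)] by simp
  have "a \<le> r" by (rule LIMSEQ_le_const[OF L]) (use A in blast)
  moreover have "r \<le> b" by (rule LIMSEQ_le_const2[OF L]) (use A in blast)
  ultimately show ?thesis by simp
qed

lemma state_seq_states:
  assumes "is_code n R E D" "\<forall>i\<ge>1. ms i \<in> {1..nmsg n (R i)}"
  shows "state_seq E ms i \<in> states n"
proof (induction i)
  case 0 then show ?case by simp
next
  case (Suc i)
  then show ?case using assms by (simp add: is_code_def)
qed

lemma zero_code: "0 \<in> RS \<alpha> \<beta> p n"
proof -
  have ss: "state_seq (\<lambda>i m u. u) ms i = (\<lambda>_. False)" for ms i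
    by (induction i) auto
  have "is_code n (\<lambda>_. 0) (\<lambda>i m u. u) (\<lambda>i v. 1)" by (auto simp: is_code_def)
  moreover have "constrained n \<alpha> \<beta> p (\<lambda>_. 0) (\<lambda>i m u. u)" by (simp add: constrained_def ss)
  moreover have "has_rate (\<lambda>_. 0) 0" by (simp add: has_rate_def)
  ultimately show ?thesis unfolding RS_def by blast
qed

lemma RS_bounds:
  assumes "r \<in> RS \<alpha> \<beta> p n" "n \<ge> 1"
  shows "0 \<le> r \<and> r \<le> 2"
proof -
  obtain R E D where c: "is_code n R E D" and h: "has_rate R r" using assms(1) by (auto simp: RS_def)
  show ?thesis by (rule rate_bounds[OF h]) (use c R_le2[OF c _ assms(2)] in \<open>auto simp: is_code_def\<close>)
qed

lemma RS_bdd: "n \<ge> 1 \<Longrightarrow> bdd_above (RS \<alpha> \<beta> p n)"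
  using RS_bounds by (meson bdd_aboveI)

lemma Cn_bounds: "n \<ge> 1 \<Longrightarrow> 0 \<le> Cn \<alpha> \<beta> p n \<and> Cn \<alpha> \<beta> p n \<le> 2"
proof -
  assume n: "n \<ge> 1"
  have "0 \<le> Sup (RS \<alpha> \<beta> p n)" by (rule cSup_upper[OF zero_code RS_bdd[OF n]])
  moreover have "Sup (RS \<alpha> \<beta> p n) \<le> 2"
    by (rule cSup_least) (use zero_code[of \<alpha> \<beta> p n] RS_bounds[OF _ n] in auto)
  ultimately show ?thesis unfolding Cn_RS by simp
qed

lemma Cn_ge: "r \<in> RS \<alpha> \<beta> p n \<Longrightarrow> n \<ge> 1 \<Longrightarrow> r \<le> Cn \<alpha> \<beta> p n"
  unfolding Cn_RS by (rule cSup_upper) (auto intro: RS_bdd)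

lemma Cn_le: "(\<And>r. r \<in> RS \<alpha> \<beta> p n \<Longrightarrow> r \<le> z) \<Longrightarrow> Cn \<alpha> \<beta> p n \<le> z"
  unfolding Cn_RS by (rule cSup_least) (use zero_code[of \<alpha> \<beta> p n] in auto)


lemma j0prop:
  fixes x j l \<beta> m r base j0 :: nat
  assumes "x = j + l" "l < \<beta>" "x = base + r" "r < m" "\<beta> \<le> m"
    "j0 = (if j \<le> base then 0 else min (j - base) (m - \<beta>))"
  shows "j0 \<le> r \<and> r < j0 + \<beta> \<and> j0 + \<beta> \<le> m"
  using assms by (auto split: if_splits simp: min_def)

lemma my_digits: "(\<Sum>b<k. (x div M^b mod M) * M^b) = (x::nat) mod M^k"
proof (induction k)
  case 0 then show ?case by simp
next
  case (Suc k)
  have "x mod M ^ Suc k = M^k * (x div M^k mod M) + x mod M^k"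
    by (metis mod_mult2_eq power_Suc2)
  then show ?case using Suc by simp
qed

lemma blk: "c < (s::nat) \<Longrightarrow> (b * s + c) div s = b \<and> (b * s + c) mod s = c"
  by simp

lemma blkdiv:
  fixes x j l \<beta> m s :: nat
  assumes "s = m + \<beta>" "x = j + l" "l < \<beta>" "x mod s < m"
  shows "(j + \<beta>) div s = x div s"
proof (rule div_nat_eqI)
  have "x = s * (x div s) + x mod s" by simp
  moreover have "s * Suc (x div s) = s * (x div s) + s" by simp
  ultimately show "s * (x div s) \<le> j + \<beta>" "j + \<beta> < s * Suc (x div s)" using assms by linarith+
qed
lemma nmsg_pow:
  assumes b0: "0 \<le> b" and bl: "b \<le> real k / real N * max 0 (real m * R - 1)" and R0: "R \<ge> 0"
  shows "nmsg N b \<le> (nmsg m R)^k"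
proof (cases "real m * R \<le> 1")
  case True
  hence "b = 0" using b0 bl by simp
  thus ?thesis using nmsg_ge1[OF R0, of m] by (simp add: one_le_power nmsg_def)
next
  case False
  define w where "w = 2 powr (real m * R)"
  have "(2::real) powr 1 \<le> 2 powr (real m * R)" by (rule powr_mono) (use False in auto)
  hence w2: "w \<ge> 2" unfolding w_def by simp
  have Nb: "real N * b \<le> real k * (real m * R - 1)"
  proof (cases "N = 0")
    case True then show ?thesis using False by simp
  next
    case False
    then show ?thesis using bl \<open>\<not> real m * R \<le> 1\<close> by (simp add: field_simps)
  qed
  have "real (nmsg N b) \<le> 2 powr (real N * b)"
    unfolding nmsg_def by (simp add: of_nat_floor)
  also have "\<dots> \<le> 2 powr (real k * (real m * R - 1))" using Nb by simp
  also have "\<dots> = (2 powr (real m * R - 1)) ^ k"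
  proof -
    have "2 powr (real k * (real m * R - 1)) = (2 powr (real m * R - 1)) powr (real k)"
      by (simp add: powr_powr mult.commute)
    also have "\<dots> = (2 powr (real m * R - 1)) ^ k" by (simp add: powr_realpow)
    finally show ?thesis .
  qed
  also have "2 powr (real m * R - 1) = w / 2" by (simp add: w_def powr_diff)
  also have "w / 2 \<le> real (nmsg m R)"
  proof -
    have "real (nmsg m R) = of_int \<lfloor>w\<rfloor>" unfolding nmsg_def w_def using w2 w_def by simp
    moreover have "of_int \<lfloor>w\<rfloor> \<ge> w - 1" by linarith
    ultimately show ?thesis using w2 by linarith
  qed
  hence "(w / 2) ^ k \<le> real (nmsg m R) ^ k" using w2 by (intro power_mono) auto
  finally show ?thesis by (metis of_nat_le_iff of_nat_power)
qed

lemma greedy: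
  fixes y z :: "nat \<Rightarrow> real" and t :: real
  assumes y0: "\<forall>i. 0 \<le> y i" and zy: "\<forall>i. z i \<le> y i" and t0: "t \<ge> 0"
    and zl: "(\<lambda>n. (\<Sum>i=1..n. z i) / real n) \<longlonglongrightarrow> t"
  shows "\<exists>b. (\<forall>i. 0 \<le> b i \<and> b i \<le> y i) \<and> (\<lambda>n. (\<Sum>i=1..n. b i) / real n) \<longlonglongrightarrow> t"
proof -
  define B where "B = rec_nat 0 (\<lambda>n v. min (v + y (Suc n)) (t * real (Suc n)))"
  have B0: "B 0 = 0" by (simp add: B_def)
  have BS: "B (Suc n) = min (B n + y (Suc n)) (t * real (Suc n))" for n by (simp add: B_def)
  have Ble: "B n \<le> t * real n" for n
    by (cases n) (simp_all add: B0 BS)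
  define b where "b i = B i - B (i - 1)" for i
  have bb: "0 \<le> b i \<and> b i \<le> y i" for i
  proof (cases i)
    case 0 then show ?thesis using y0 by (simp add: b_def)
  next
    case (Suc n)
    have "B n \<le> t * real (Suc n)" using Ble[of n] t0
      by (smt (verit) mult_left_mono of_nat_Suc)
    then show ?thesis using y0 Suc by (simp add: b_def BS)
  qed
  have sumb: "(\<Sum>i=1..n. b i) = B n" for n
    by (induction n) (simp_all add: B0 b_def)
  define Y where "Y n = (\<Sum>i=1..n. y i)" for n
  define Z where "Z n = (\<Sum>i=1..n. z i)" for n
  have rep: "\<exists>j\<le>n. B n = t * real j + (Y n - Y j)" for n
  proof (induction n)
    case 0 then show ?case by (simp add: B0 Y_def)
  next
    case (Suc n)
    then obtain j where j: "j \<le> n" "B n = t * real j + (Y n - Y j)" by blast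
    show ?case
    proof (cases "B n + y (Suc n) \<le> t * real (Suc n)")
      case True
      hence "B (Suc n) = t * real j + (Y (Suc n) - Y j)" using j by (simp add: BS Y_def)
      then show ?thesis using j(1) le_SucI by blast
    next
      case False
      hence "B (Suc n) = t * real (Suc n) + (Y (Suc n) - Y (Suc n))" by (simp add: BS)
      then show ?thesis by blast
    qed
  qed
  have inc: "incseq (\<lambda>n. Y n - Z n)"
    by (rule incseq_SucI) (use zy in \<open>simp add: Y_def Z_def\<close>)
  have YZ: "Y n - Y j \<ge> Z n - Z j" if "j \<le> n" for j n
    using incseqD[OF inc that] by simp
  have "(\<lambda>n. B n / real n) \<longlonglongrightarrow> t"
  proof (rule LIMSEQ_I)
    fix \<epsilon> :: real assume ep: "0 < \<epsilon>"
    define e where "e n = Z n - t * real n" for n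
    have "(\<lambda>n. Z n / real n - t) \<longlonglongrightarrow> 0"
      using tendsto_diff[OF zl tendsto_const[of t]] by (simp add: Z_def)
    then obtain J0 where J0: "\<forall>n\<ge>J0. \<bar>Z n / real n - t\<bar> < \<epsilon> / 4"
      using ep unfolding LIMSEQ_def dist_real_def by (metis diff_zero divide_pos_pos zero_less_numeral)
    define J where "J = max J0 1"
    have eJ: "\<bar>e j\<bar> \<le> \<epsilon> / 4 * real j" if "j \<ge> J" for j
    proof -
      have "\<bar>Z j / real j - t\<bar> < \<epsilon> / 4" using J0 that by (simp add: J_def)
      moreover have "real j > 0" using that by (simp add: J_def)
      moreover have "Z j / real j - t = e j / real j" using \<open>real j > 0\<close> by (simp add: e_def field_simps)
      ultimately have "\<bar>e j\<bar> / real j < \<epsilon> / 4" by simp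
      thus ?thesis using \<open>real j > 0\<close> by (simp add: field_simps)
    qed
    define K where "K = (\<Sum>j<J. \<bar>e j\<bar>)"
    have eK: "\<bar>e j\<bar> \<le> K" if "j < J" for j
      unfolding K_def by (rule member_le_sum) (use that in auto)
    have K0: "K \<ge> 0" unfolding K_def by (simp add: sum_nonneg)
    define N0 where "N0 = max J (nat \<lceil>4 * K / \<epsilon>\<rceil> + 1)"
    show "\<exists>no. \<forall>n\<ge>no. norm (B n / real n - t) < \<epsilon>"
    proof (intro exI allI impI)
      fix n assume n: "n \<ge> N0"
      have npos: "real n > 0" using n by (simp add: N0_def J_def)
      have "real n > 4 * K / \<epsilon>" using n unfolding N0_def by linarith
      hence Kn: "K < \<epsilon> / 4 * real n" using ep by (simp add: field_simps)
      have en: "\<bar>e n\<bar> \<le> \<epsilon> / 4 * real n" using eJ n by (simp add: N0_def)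
      obtain j where j: "j \<le> n" "B n = t * real j + (Y n - Y j)" using rep by blast
      have "\<bar>e j\<bar> \<le> \<epsilon> / 4 * real n"
      proof (cases "j < J")
        case True then show ?thesis using eK Kn by force
      next
        case False
        hence "\<bar>e j\<bar> \<le> \<epsilon> / 4 * real j" using eJ by simp
        also have "\<dots> \<le> \<epsilon> / 4 * real n" using j(1) ep by simp
        finally show ?thesis .
      qed
      hence "e j \<le> \<epsilon> / 4 * real n" by simp
      moreover have "e n \<ge> - (\<epsilon> / 4 * real n)" using en by simp
      ultimately have "B n \<ge> t * real n - \<epsilon> / 2 * real n"
        using j YZ[OF j(1)] unfolding e_def by simp
      hence "B n / real n \<ge> t - \<epsilon> / 2" using npos by (simp add: field_simps)
      moreover have "B n / real n \<le> t" using Ble[of n] npos by (simp add: field_simps)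
      ultimately show "norm (B n / real n - t) < \<epsilon>" using ep by simp
    qed
  qed
  thus ?thesis using bb sumb by (intro exI[of _ b]) simp
qed




lemma block_code:
  assumes code: "is_code m R E D" and con: "constrained m \<alpha> \<beta> p R E" and rate: "has_rate R r"
    and mb: "m \<ge> \<beta>" and b1: "\<beta> \<ge> 1" and kN: "k * (m + \<beta>) \<le> N" and N1: "N \<ge> 1"
    and t0: "real k / real N * (real m * r - 1) \<ge> 0"
  shows "real k / real N * (real m * r - 1) \<in> RS \<alpha> \<beta> p N"
proof -
  define t where "t = real k / real N * (real m * r - 1)"
  define s where "s = m + \<beta>"
  have s0: "s > 0" using b1 by (simp add: s_def)
  define M where "M i = nmsg m (R i)" for i
  have R0: "\<forall>i\<ge>1. R i \<ge> 0" using code by (simp add: is_code_def)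
  have M1: "M i \<ge> 1" if "i \<ge> 1" for i using nmsg_ge1 R0 that by (simp add: M_def)
  define dig where "dig i w bb = ((w - 1) div (M i)^bb) mod (M i) + 1" for i w bb :: nat
  have dig_rng: "dig i w bb \<in> {1..M i}" if "i \<ge> 1" for i w bb
    using M1[OF that] by (simp add: dig_def Suc_leI)
  define rst where "rst u bb = (\<lambda>c. if c < m then u (bb * s + c) else False)" for u :: "nat \<Rightarrow> bool" and bb
  have rst_st: "rst u bb \<in> states m" for u bb by (simp add: rst_def states_def)
  define inb where "inb x \<longleftrightarrow> x < k * s \<and> x mod s < m" for x
  have inb_blk: "inb (bb * s + c)" if "bb < k" "c < m" for bb c
  proof -
    have "bb * s + c < bb * s + s" using that by (simp add: s_def)
    also have "\<dots> = Suc bb * s" by simp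
    also have "\<dots> \<le> k * s" using that(1) by (intro mult_right_mono) auto
    finally show ?thesis using that blk[of c s bb] by (simp add: inb_def s_def)
  qed
  have blk': "(bb * s + c) div s = bb" "(bb * s + c) mod s = c" if "c < m" for bb c
    using blk[of c s bb] that by (simp_all add: s_def)
  define E' where "E' i w u = (\<lambda>x. if inb x then E i (dig i w (x div s)) (rst u (x div s)) (x mod s) else False)"
    for i w u
  have E'x: "E' i w u x = (if inb x then E i (dig i w (x div s)) (rst u (x div s)) (x mod s) else False)"
    for i w u x by (simp add: E'_def)
  define D' where "D' i v = (\<Sum>bb<k. (D i (rst v bb) - 1) * M i ^ bb) + 1" for i v
  define y where "y i = real k / real N * max 0 (real m * R i - 1)" for i
  define z where "z i = real k / real N * (real m * R i - 1)" for i
  have zl: "(\<lambda>n. (\<Sum>i=1..n. z i) / real n) \<longlonglongrightarrow> t"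
  proof -
    have L: "(\<lambda>n. real k / real N * (real m * ((\<Sum>i=1..n. R i) / real n) - 1)) \<longlonglongrightarrow> t"
      unfolding t_def using rate unfolding has_rate_def by (intro tendsto_intros)
    have ev: "\<forall>\<^sub>F n in sequentially. real k / real N * (real m * ((\<Sum>i=1..n. R i) / real n) - 1)
                = (\<Sum>i=1..n. z i) / real n"
    proof (rule eventually_sequentiallyI[of 1])
      fix n :: nat assume n: "n \<ge> 1"
      have "(\<Sum>i=1..n. real m * R i - 1) = real m * (\<Sum>i=1..n. R i) - real n"
        by (simp add: sum_subtractf sum_distrib_left)
      hence "(\<Sum>i=1..n. z i) = real k / real N * (real m * (\<Sum>i=1..n. R i) - real n)"
        unfolding z_def by (subst sum_distrib_left[symmetric]) simp
      thus "real k / real N * (real m * ((\<Sum>i=1..n. R i) / real n) - 1) = (\<Sum>i=1..n. z i) / real n"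
        using n by (simp add: field_simps)
    qed
    show ?thesis using Lim_transform_eventually[OF L ev] .
  qed
  obtain b where bb: "\<forall>i. 0 \<le> b i \<and> b i \<le> y i" and bl: "(\<lambda>n. (\<Sum>i=1..n. b i) / real n) \<longlonglongrightarrow> t"
  proof -
    have y0: "\<forall>i. 0 \<le> y i" unfolding y_def by simp
    have zy: "\<forall>i. z i \<le> y i" unfolding y_def z_def by (intro allI mult_left_mono) auto
    have "t \<ge> 0" using t0 by (simp add: t_def)
    from greedy[OF y0 zy this zl] show ?thesis using that by blast
  qed
  have nb: "nmsg N (b i) \<le> M i ^ k" if "i \<ge> 1" for i
    unfolding M_def using nmsg_pow[of "b i" k N m "R i"] bb R0 that by (simp add: y_def)
  have rstE: "rst (E' i w u) bb = E i (dig i w bb) (rst u bb)" if "i \<ge> 1" "bb < k" for i w u bb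
  proof
    fix c show "rst (E' i w u) bb c = E i (dig i w bb) (rst u bb) c"
    proof (cases "c < m")
      case True then show ?thesis using inb_blk[OF that(2) True] blk'[OF True]
        by (simp add: rst_def E'_def)
    next
      case False
      have "E i (dig i w bb) (rst u bb) \<in> states m"
        using code that dig_rng[OF that(1)] rst_st by (simp add: is_code_def M_def)
      then show ?thesis using False by (simp add: rst_def states_def)
    qed
  qed
  have iscode: "is_code N b E' D'"
    unfolding is_code_def
  proof (intro allI impI conjI)
    fix i :: nat assume i: "i \<ge> 1"
    show "0 \<le> b i" using bb by simp
    show "\<forall>w\<in>{1..nmsg N (b i)}. \<forall>u\<in>states N. E' i w u \<in> states N \<and> D' i (E' i w u) = w"
    proof (intro ballI conjI)
      fix w u assume w: "w \<in> {1..nmsg N (b i)}" and u: "u \<in> states N"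
      show "E' i w u \<in> states N"
      proof -
        have "\<not> inb x" if "x \<ge> N" for x using that kN by (simp add: inb_def s_def)
        thus ?thesis by (simp add: states_def E'_def)
      qed
      have "D i (rst (E' i w u) bb) = dig i w bb" if "bb < k" for bb
        using rstE[OF i that] code i dig_rng[OF i] rst_st by (simp add: is_code_def M_def)
      hence "D' i (E' i w u) = (\<Sum>bb<k. ((w - 1) div (M i)^bb mod (M i)) * M i ^ bb) + 1"
        unfolding D'_def by (simp add: dig_def)
      also have "\<dots> = (w - 1) mod (M i)^k + 1" by (simp add: my_digits)
      also have "\<dots> = w"
      proof -
        have "w - 1 < M i ^ k" using w nb[OF i] by auto
        thus ?thesis using w by simp
      qed
      finally show "D' i (E' i w u) = w" .
    qed
  qed
  have constr: "constrained N \<alpha> \<beta> p b E'"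
    unfolding constrained_def
  proof (intro allI impI)
    fix ms' :: "nat \<Rightarrow> nat" and i j
    assume valid: "\<forall>i\<ge>1. ms' i \<in> {1..nmsg N (b i)}" and jN: "j + \<beta> \<le> N"
    define msb where "msb bb i = dig i (ms' i) bb" for bb i
    have vb: "\<forall>i\<ge>1. msb bb i \<in> {1..nmsg m (R i)}" for bb
      using dig_rng by (simp add: msb_def M_def)
    have SS: "state_seq E' ms' n x = (if inb x then state_seq E (msb (x div s)) n (x mod s) else False)"
      for n x
    proof (induction n arbitrary: x)
      case 0 then show ?case by simp
    next
      case (Suc n)
      show ?case
      proof (cases "inb x")
        case True
        define q where "q = x div s"
        have qk: "q < k"
        proof -
          have "x < k * s" using True by (simp add: inb_def)
          thus ?thesis unfolding q_def by (simp add: less_mult_imp_div_less)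
        qed
        have "rst (state_seq E' ms' n) q = state_seq E (msb q) n"
        proof
          fix c show "rst (state_seq E' ms' n) q c = state_seq E (msb q) n c"
          proof (cases "c < m")
            case True then show ?thesis using Suc.IH inb_blk[OF qk True] blk'[OF True]
              by (simp add: rst_def)
          next
            case False
            have "state_seq E (msb q) n \<in> states m" using state_seq_states[OF code vb] .
            then show ?thesis using False by (simp add: rst_def states_def)
          qed
        qed
        hence "state_seq E' ms' (Suc n) x = E (Suc n) (msb q (Suc n)) (state_seq E (msb q) n) (x mod s)"
          using E'x[of "Suc n" "ms' (Suc n)" "state_seq E' ms' n" x] True
          by (simp only: state_seq.simps q_def[symmetric] msb_def if_True)
        then show ?thesis using True by (simp add: q_def)
      next
        case False then show ?thesis using E'x[of "Suc n" "ms' (Suc n)" "state_seq E' ms' n" x] by simp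
      qed
    qed
    define bk where "bk = (j + \<beta>) div s"
    define base where "base = bk * s"
    define j0 where "j0 = (if j \<le> base then 0 else min (j - base) (m - \<beta>))"
    have j0m: "j0 + \<beta> \<le> m" using mb by (auto simp: j0_def min_def)
    define S where "S = {(kk, l). kk < \<alpha> \<and> l < \<beta> \<and>
        state_seq E (msb bk) (i + kk) (j0 + l) \<noteq> state_seq E (msb bk) (i + kk + 1) (j0 + l)}"
    have cS: "card S \<le> p"
      using con vb j0m unfolding constrained_def S_def by blast
    have fS: "finite S"
      by (rule finite_subset[of _ "{..<\<alpha>} \<times> {..<\<beta>}"]) (auto simp: S_def)
    define g where "g = (\<lambda>(kk::nat, l'::nat). (kk, base + j0 + l' - j))"
    have sub: "{(kk, l). kk < \<alpha> \<and> l < \<beta> \<and> state_seq E' ms' (i + kk) (j + l) \<noteq> state_seq E' ms' (i + kk + 1) (j + l)}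
        \<subseteq> g ` S"
    proof clarify
      fix kk l assume kk: "kk < \<alpha>" and l: "l < \<beta>"
        and ne: "state_seq E' ms' (i + kk) (j + l) \<noteq> state_seq E' ms' (i + kk + 1) (j + l)"
      define x where "x = j + l"
      have ix: "inb x" using ne SS[of "i+kk" x] SS[of "i+kk+1" x] unfolding x_def by (cases "inb (j+l)") auto
      have xm: "x mod s < m" using ix by (simp add: inb_def)
      have qb: "x div s = bk" unfolding bk_def
        using blkdiv[of s m \<beta> x j l] s_def x_def l xm by simp
      define c where "c = x mod s"
      have xc: "x = base + c" unfolding base_def c_def using qb
        by (metis div_mult_mod_eq)
      have cm: "c < m" using xm by (simp add: c_def)
      have jj: "j0 \<le> c \<and> c < j0 + \<beta> \<and> j0 + \<beta> \<le> m"
        using j0prop[of x j l \<beta> base c m j0] x_def l xc cm mb j0_def by blast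
      have "(kk, c - j0) \<in> S"
      proof -
        have "j0 + (c - j0) = c" using jj by simp
        moreover have "c - j0 < \<beta>" using jj by arith
        moreover have e1: "state_seq E' ms' (i + kk) x = state_seq E (msb bk) (i + kk) c"
          using SS[of "i + kk" x] ix by (simp add: qb c_def del: state_seq.simps)
        moreover have e2: "state_seq E' ms' (i + kk + 1) x = state_seq E (msb bk) (i + kk + 1) c"
          using SS[of "i + kk + 1" x] ix by (simp add: qb c_def del: state_seq.simps)
        moreover have "state_seq E' ms' (i + kk) x \<noteq> state_seq E' ms' (i + kk + 1) x"
          using ne by (simp add: x_def del: state_seq.simps)
        ultimately show ?thesis using kk unfolding S_def by (simp del: state_seq.simps)
      qed
      moreover have "g (kk, c - j0) = (kk, l)" using jj xc x_def by (simp add: g_def)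
      ultimately show "(kk, l) \<in> g ` S" by (metis image_eqI)
    qed
    have "card {(kk, l). kk < \<alpha> \<and> l < \<beta> \<and> state_seq E' ms' (i + kk) (j + l) \<noteq> state_seq E' ms' (i + kk + 1) (j + l)}
        \<le> card (g ` S)" using sub fS by (intro card_mono) auto
    also have "\<dots> \<le> card S" using fS by (rule card_image_le)
    finally show "card {(kk, l). kk < \<alpha> \<and> l < \<beta> \<and> state_seq E' ms' (i + kk) (j + l) \<noteq> state_seq E' ms' (i + kk + 1) (j + l)} \<le> p"
      using cS by linarith
  qed
  have "has_rate b t" using bl by (simp add: has_rate_def)
  thus ?thesis using iscode constr unfolding RS_def t_def by blast
qed

lemma arith_key:
  fixes A X m N k b :: real
  assumes A0: "0 \<le> A" and X2: "X \<le> 2" and X0: "0 \<le> X" and m1: "1 \<le> m" and b0: "0 \<le> b"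
    and Nk: "N < (k + 1) * (m + b)" and N0: "0 < N" and k0: "0 \<le> k"
    and h: "m * X - 1 \<le> 0 \<or> k * (m * X - 1) \<le> A * N"
  shows "A \<ge> X - (2 * b + 1) / m - 2 * m / N"
proof -
  have mN: "2 * m / N \<ge> 0" using m1 N0 by simp
  have c1: "(2 * b + 1) / m \<ge> 1 / m" using m1 b0 by (simp add: divide_right_mono)
  show ?thesis
  proof (cases "m * X - 1 \<le> 0")
    case True
    hence "X \<le> 1 / m" using m1 by (simp add: field_simps)
    then show ?thesis using A0 mN c1 by linarith
  next
    case False
    define d where "d = m * X - 1"
    define s where "s = m + b"
    have d0: "d > 0" using False by (simp add: d_def)
    have s0: "s > 0" using m1 b0 by (simp add: s_def)
    have h0: "k * d \<le> A * N" using h False by (simp add: d_def)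
    have h1: "N / s - 1 < k" using Nk s0 by (simp add: s_def field_simps)
    have h2: "(N / s - 1) * d \<le> k * d" using h1 d0 by (intro mult_right_mono) auto
    have h3: "A * N \<ge> N * d / s - d" using h0 h2 by (simp add: algebra_simps)
    have h4: "A \<ge> d / s - d / N"
    proof -
      have "(d / s - d / N) * N = N * d / s - d" using N0 by (simp add: field_simps)
      hence "A * N \<ge> (d / s - d / N) * N" using h3 by simp
      thus ?thesis using N0 by (simp add: mult_le_cancel_right)
    qed
    have h5a: "d / s = X - (b * X + 1) / s" using s0 by (simp add: d_def s_def field_simps)
    have "b * X \<le> b * 2" using X2 b0 by (rule mult_left_mono)
    hence h5b: "(b * X + 1) / s \<le> (2 * b + 1) / s" using s0 by (intro divide_right_mono) auto
    have h5c: "(2 * b + 1) / s \<le> (2 * b + 1) / m" using s0 m1 b0 by (intro divide_left_mono) (auto simp: s_def)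
    have "m * X \<le> m * 2" using X2 m1 by (intro mult_left_mono) auto
    hence h6: "d / N \<le> 2 * m / N" using N0 by (intro divide_right_mono) (auto simp: d_def)
    show ?thesis using h4 h5a h5b h5c h6 by linarith
  qed
qed

lemma key_ineq:
  assumes m1: "m \<ge> 1" and mb: "m \<ge> \<beta>" and b1: "\<beta> \<ge> 1" and N: "N \<ge> m + \<beta>"
  shows "Cn \<alpha> \<beta> p N \<ge> Cn \<alpha> \<beta> p m - real (2 * \<beta> + 1) / real m - 2 * real m / real N"
proof -
  define s where "s = m + \<beta>"
  define k where "k = N div s"
  have s0: "s > 0" using m1 by (simp add: s_def)
  have k1: "k \<ge> 1" using N s0 by (simp add: k_def s_def div_greater_zero_iff Suc_le_eq)
  have NE: "N = k * s + N mod s" by (simp add: k_def)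
  have ks: "k * (m + \<beta>) \<le> N" using NE by (simp add: s_def)
  have Nlt: "N < (k + 1) * s" using NE mod_less_divisor[OF s0, of N] by simp
  have N1: "N \<ge> 1" using N m1 by simp
  define A where "A = Cn \<alpha> \<beta> p N"
  define X where "X = Cn \<alpha> \<beta> p m"
  have A0: "A \<ge> 0" using Cn_bounds[OF N1] by (simp add: A_def)
  have X02: "0 \<le> X \<and> X \<le> 2" using Cn_bounds[OF m1] by (simp add: X_def)
  have mpos: "real m > 0" using m1 by simp
  have Npos: "real N > 0" using N1 by simp
  have kpos: "real k > 0" using k1 by simp
  have bound: "X \<le> max (1 / real m) ((A * real N / real k + 1) / real m)"
    unfolding X_def
  proof (rule Cn_le)
    fix r assume r: "r \<in> RS \<alpha> \<beta> p m"
    show "r \<le> max (1 / real m) ((A * real N / real k + 1) / real m)"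
    proof (cases "real m * r \<le> 1")
      case True
      hence "r \<le> 1 / real m" using mpos by (simp add: field_simps)
      then show ?thesis by simp
    next
      case False
      obtain R E D where c: "is_code m R E D" "constrained m \<alpha> \<beta> p R E" "has_rate R r"
        using r by (auto simp: RS_def)
      have t0: "real k / real N * (real m * r - 1) \<ge> 0" using False by simp
      have "real k / real N * (real m * r - 1) \<in> RS \<alpha> \<beta> p N"
        by (rule block_code[OF c mb b1 ks N1 t0])
      hence "real k / real N * (real m * r - 1) \<le> A" unfolding A_def using Cn_ge N1 by blast
      hence "real k * (real m * r - 1) \<le> A * real N" using Npos by (simp add: field_simps)
      hence "real m * r - 1 \<le> A * real N / real k" using kpos by (simp add: field_simps)
      hence "r \<le> (A * real N / real k + 1) / real m" using mpos by (simp add: field_simps)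
      then show ?thesis by simp
    qed
  qed
  have h: "real m * X - 1 \<le> 0 \<or> real k * (real m * X - 1) \<le> A * real N"
  proof (cases "X \<le> 1 / real m")
    case True
    then show ?thesis using mpos by (simp add: field_simps)
  next
    case False
    hence "X \<le> (A * real N / real k + 1) / real m" using bound by simp
    hence "real m * X - 1 \<le> A * real N / real k" using mpos by (simp add: field_simps)
    hence "real k * (real m * X - 1) \<le> A * real N" using kpos by (simp add: field_simps)
    then show ?thesis by simp
  qed
  have Nk: "real N < (real k + 1) * (real m + real \<beta>)"
  proof -
    have "real N < real ((k + 1) * s)" using Nlt by linarith
    thus ?thesis by (simp add: s_def algebra_simps)
  qed
  have "A \<ge> X - (2 * real \<beta> + 1) / real m - 2 * real m / real N"
    by (rule arith_key) (use A0 X02 m1 Nk Npos h in auto)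
  thus ?thesis by (simp add: A_def X_def add.commute)
qed



lemma stride_code:
  assumes code: "is_code m R E D" and con: "constrained m \<alpha> 1 p R E" and rate: "has_rate R r"
    and b1: "\<beta> \<ge> 1"
  shows "r / real \<beta> \<in> RS \<alpha> \<beta> p (\<beta> * m)"
proof -
  define gat where "gat u = (\<lambda>j. if j < m then u (\<beta> * j) else False)" for u :: "nat \<Rightarrow> bool"
  define spr where "spr v = (\<lambda>x. x mod \<beta> = 0 \<and> v (x div \<beta>))" for v :: "nat \<Rightarrow> bool"
  have bpos: "\<beta> > 0" using b1 by simp
  have gat_st: "gat u \<in> states m" for u by (simp add: gat_def states_def)
  have spr_st: "spr v \<in> states (\<beta> * m)" if "v \<in> states m" for v
  proof -
    have "\<not> spr v x" if "x \<ge> \<beta> * m" for x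
    proof -
      have "(\<beta> * m) div \<beta> \<le> x div \<beta>" using that by (rule div_le_mono)
      hence "x div \<beta> \<ge> m" using bpos by simp
      thus ?thesis using \<open>v \<in> states m\<close> by (simp add: spr_def states_def)
    qed
    thus ?thesis by (simp add: states_def)
  qed
  have gat_spr: "gat (spr v) = v" if "v \<in> states m" for v
  proof
    fix j show "gat (spr v) j = v j"
      using that bpos by (auto simp: gat_def spr_def states_def)
  qed
  define R' where "R' i = R i / real \<beta>" for i
  have nm: "nmsg (\<beta> * m) (R' i) = nmsg m (R i)" for i
    using bpos by (simp add: nmsg_def R'_def)
  define E' where "E' i w u = spr (E i w (gat u))" for i w u
  define D' where "D' i v = D i (gat v)" for i v
  have iscode: "is_code (\<beta> * m) R' E' D'"
    unfolding is_code_def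
  proof (intro allI impI conjI)
    fix i :: nat assume i: "i \<ge> 1"
    show "0 \<le> R' i" using code i by (simp add: is_code_def R'_def)
    show "\<forall>w\<in>{1..nmsg (\<beta> * m) (R' i)}. \<forall>u\<in>states (\<beta> * m). E' i w u \<in> states (\<beta> * m) \<and> D' i (E' i w u) = w"
    proof (intro ballI conjI)
      fix w u assume w: "w \<in> {1..nmsg (\<beta> * m) (R' i)}"
      hence w': "w \<in> {1..nmsg m (R i)}" by (simp add: nm)
      have Est: "E i w (gat u) \<in> states m" using code i w' gat_st by (simp add: is_code_def)
      show "E' i w u \<in> states (\<beta> * m)" unfolding E'_def by (rule spr_st[OF Est])
      show "D' i (E' i w u) = w" unfolding D'_def E'_def gat_spr[OF Est]
        using code i w' gat_st by (simp add: is_code_def)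
    qed
  qed
  have constr: "constrained (\<beta> * m) \<alpha> \<beta> p R' E'"
    unfolding constrained_def
  proof (intro allI impI)
    fix ms :: "nat \<Rightarrow> nat" and i j
    assume valid': "\<forall>i\<ge>1. ms i \<in> {1..nmsg (\<beta> * m) (R' i)}" and jN: "j + \<beta> \<le> \<beta> * m"
    have valid: "\<forall>i\<ge>1. ms i \<in> {1..nmsg m (R i)}" using valid' by (simp add: nm)
    have SS: "state_seq E' ms n = spr (state_seq E ms n)" for n
    proof (induction n)
      case 0 then show ?case by (auto simp: spr_def)
    next
      case (Suc n)
      then show ?case
        using gat_spr[OF state_seq_states[OF code valid, of n]] by (simp add: E'_def)
    qed
    define st where "st = state_seq E ms"
    define c where "c = (j + \<beta> - 1) div \<beta>"
    define S' where "S' = {(kk, l). kk < \<alpha> \<and> l < \<beta> \<and> state_seq E' ms (i + kk) (j + l) \<noteq> state_seq E' ms (i + kk + 1) (j + l)}"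
    define S where "S = {(kk, l). kk < \<alpha> \<and> l < (1::nat) \<and> st (i + kk) (c + l) \<noteq> st (i + kk + 1) (c + l)}"
    have mem: "x div \<beta> = c \<and> x = \<beta> * c \<and> kk < \<alpha> \<and> st (i + kk) c \<noteq> st (i + kk + 1) c"
      if "(kk, l) \<in> S'" "x = j + l" for kk l x
    proof -
      have kk: "kk < \<alpha>" and l: "l < \<beta>" and ne: "spr (st (i + kk)) x \<noteq> spr (st (i + kk + 1)) x"
        using that by (simp_all add: S'_def SS st_def del: state_seq.simps)
      have xm: "x mod \<beta> = 0" and ne2: "st (i + kk) (x div \<beta>) \<noteq> st (i + kk + 1) (x div \<beta>)"
        using ne by (auto simp: spr_def)
      have xe: "x = \<beta> * (x div \<beta>)" using xm by (metis mult_div_mod_eq add_0_right)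
      have "c = x div \<beta>" unfolding c_def
      proof (rule div_nat_eqI)
        show "\<beta> * (x div \<beta>) \<le> j + \<beta> - 1" using xe that(2) l by linarith
        show "j + \<beta> - 1 < \<beta> * Suc (x div \<beta>)" using xe that(2) l bpos by simp
      qed
      thus ?thesis using xe kk ne2 by simp
    qed
    have "card S' \<le> p"
    proof (cases "c + 1 \<le> m")
      case False
      have "S' = {}"
      proof (rule ccontr)
        assume "S' \<noteq> {}"
        then obtain kk l where "(kk, l) \<in> S'" by auto
        from mem[OF this refl] have "st (i + kk) c \<noteq> st (i + kk + 1) c" by simp
        moreover have "st n \<in> states m" for n using state_seq_states[OF code valid] by (simp add: st_def)
        ultimately show False using False by (auto simp: states_def)
      qed
      then show ?thesis by simp
    next
      case True
      have cS: "card S \<le> p" using con valid True unfolding constrained_def S_def st_def by blast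
      have fS: "finite S"
        by (rule finite_subset[of _ "{..<\<alpha>} \<times> {..<1}"]) (auto simp: S_def)
      define g where "g = (\<lambda>(kk::nat, l'::nat). (kk, \<beta> * c - j))"
      have "S' \<subseteq> g ` S"
      proof clarify
        fix kk l assume kl: "(kk, l) \<in> S'"
        from mem[OF kl refl] have h: "j + l = \<beta> * c" "kk < \<alpha>" "st (i + kk) c \<noteq> st (i + kk + 1) c" by auto
        have "(kk, 0) \<in> S" using h by (simp add: S_def)
        moreover have "g (kk, 0) = (kk, l)" using h by (simp add: g_def)
        ultimately show "(kk, l) \<in> g ` S" by (metis image_eqI)
      qed
      hence "card S' \<le> card (g ` S)" using fS by (intro card_mono) auto
      also have "\<dots> \<le> card S" using fS by (rule card_image_le)
      finally show ?thesis using cS by linarith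
    qed
    thus "card {(kk, l). kk < \<alpha> \<and> l < \<beta> \<and> state_seq E' ms (i + kk) (j + l) \<noteq> state_seq E' ms (i + kk + 1) (j + l)} \<le> p"
      by (simp add: S'_def)
  qed
  have "has_rate R' (r / real \<beta>)"
  proof -
    have "(\<lambda>n. (\<Sum>i=1..n. R i) / real n / real \<beta>) \<longlonglongrightarrow> r / real \<beta>"
    proof -
      have L: "(\<lambda>n. (\<Sum>i=1..n. R i) / real n) \<longlonglongrightarrow> r" using rate by (simp add: has_rate_def)
      show ?thesis by (rule tendsto_divide[OF L tendsto_const]) (use bpos in simp)
    qed
    moreover have "(\<Sum>i=1..n. R' i) / real n = (\<Sum>i=1..n. R i) / real n / real \<beta>" for n
      by (simp add: R'_def sum_divide_distrib[symmetric])
    ultimately show ?thesis by (simp add: has_rate_def)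
  qed
  thus ?thesis using iscode constr unfolding RS_def by blast
qed

lemma stretch_code:
  assumes code: "is_code n R E D" and con: "constrained n 1 \<beta> p R E" and rate: "has_rate R r"
    and a1: "\<alpha> \<ge> 1"
  shows "r / real \<alpha> \<in> RS \<alpha> \<beta> p n"
proof -
  have apos: "\<alpha> > 0" using a1 by simp
  define R' where "R' i = (if \<alpha> dvd i then R (i div \<alpha>) else 0)" for i
  define E' where "E' i w u = (if \<alpha> dvd i then E (i div \<alpha>) w u else u)" for i w u
  define D' where "D' i v = (if \<alpha> dvd i then D (i div \<alpha>) v else 1)" for i v
  have dv1: "i div \<alpha> \<ge> 1" if "\<alpha> dvd i" "i \<ge> 1" for i
    using that apos by (metis One_nat_def dvd_div_eq_0_iff le_zero_eq not_less_eq_eq less_one)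
  have iscode: "is_code n R' E' D'"
    unfolding is_code_def
  proof (intro allI impI conjI)
    fix i :: nat assume i: "i \<ge> 1"
    show "0 \<le> R' i" using code i dv1 by (simp add: is_code_def R'_def)
    show "\<forall>w\<in>{1..nmsg n (R' i)}. \<forall>u\<in>states n. E' i w u \<in> states n \<and> D' i (E' i w u) = w"
    proof (cases "\<alpha> dvd i")
      case True
      then show ?thesis using code dv1[OF True i] by (simp add: is_code_def R'_def E'_def D'_def)
    next
      case False
      then show ?thesis by (simp add: R'_def E'_def D'_def)
    qed
  qed
  have divS: "Suc x div \<alpha> = (if \<alpha> dvd Suc x then Suc (x div \<alpha>) else x div \<alpha>)" for x
    by (simp add: div_Suc dvd_eq_mod_eq_0)
  have constr: "constrained n \<alpha> \<beta> p R' E'"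
    unfolding constrained_def
  proof (intro allI impI)
    fix ms' :: "nat \<Rightarrow> nat" and i j
    assume valid': "\<forall>i\<ge>1. ms' i \<in> {1..nmsg n (R' i)}" and jN: "j + \<beta> \<le> n"
    define ms where "ms q = ms' (\<alpha> * q)" for q
    have valid: "\<forall>q\<ge>1. ms q \<in> {1..nmsg n (R q)}"
    proof (intro allI impI)
      fix q :: nat assume "q \<ge> 1"
      hence "\<alpha> * q \<ge> 1" using apos by (simp add: Suc_le_eq)
      thus "ms q \<in> {1..nmsg n (R q)}" using valid'[rule_format, OF \<open>\<alpha> * q \<ge> 1\<close>] apos
        by (simp add: ms_def R'_def)
    qed
    have SS: "state_seq E' ms' x = state_seq E ms (x div \<alpha>)" for x
    proof (induction x)
      case 0 then show ?case by simp
    next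
      case (Suc x)
      show ?case
      proof (cases "\<alpha> dvd Suc x")
        case True
        have "\<alpha> * Suc (x div \<alpha>) = Suc x" using True divS[of x] by (metis dvd_mult_div_cancel)
        then show ?thesis using Suc True divS[of x] by (simp add: E'_def ms_def)
      next
        case False
        then show ?thesis using Suc divS[of x] by (simp add: E'_def)
      qed
    qed
    define q where "q = i div \<alpha>"
    define st where "st = state_seq E ms"
    define S where "S = {(kk, l). kk < (1::nat) \<and> l < \<beta> \<and> st (q + kk) (j + l) \<noteq> st (q + kk + 1) (j + l)}"
    have cS: "card S \<le> p" using con valid jN unfolding constrained_def S_def st_def by blast
    have fS: "finite S"
      by (rule finite_subset[of _ "{..<1} \<times> {..<\<beta>}"]) (auto simp: S_def)
    define g where "g = (\<lambda>(kk::nat, l::nat). (\<alpha> * q + \<alpha> - 1 - i, l))"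
    have sub: "{(kk, l). kk < \<alpha> \<and> l < \<beta> \<and> state_seq E' ms' (i + kk) (j + l) \<noteq> state_seq E' ms' (i + kk + 1) (j + l)}
        \<subseteq> g ` S"
    proof clarify
      fix kk l assume kk: "kk < \<alpha>" and l: "l < \<beta>"
        and ne: "state_seq E' ms' (i + kk) (j + l) \<noteq> state_seq E' ms' (i + kk + 1) (j + l)"
      have ne': "st ((i + kk) div \<alpha>) (j + l) \<noteq> st (Suc (i + kk) div \<alpha>) (j + l)"
        using ne unfolding SS st_def by simp
      hence dv: "\<alpha> dvd Suc (i + kk)" using divS[of "i + kk"] by (auto split: if_splits)
      then obtain d where d: "Suc (i + kk) = \<alpha> * d" by blast
      have iq: "i = \<alpha> * q + i mod \<alpha>" by (simp add: q_def)
      have im: "i mod \<alpha> < \<alpha>" using apos by simp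
      have "q < d"
      proof (rule ccontr)
        assume "\<not> q < d"
        hence "\<alpha> * d \<le> \<alpha> * q" by simp
        thus False using d iq by linarith
      qed
      moreover have "d < q + 2"
      proof (rule ccontr)
        assume "\<not> d < q + 2"
        hence "q + 2 \<le> d" by simp
        hence "\<alpha> * (q + 2) \<le> \<alpha> * d" by (rule mult_le_mono2)
        thus False using d iq im kk by (simp add: algebra_simps)
      qed
      ultimately have dq: "d = q + 1" by simp
      have kkv: "kk = \<alpha> * q + \<alpha> - 1 - i" using d dq by (simp add: algebra_simps)
      have "(i + kk) div \<alpha> = q"
      proof (rule div_nat_eqI)
        show "\<alpha> * q \<le> i + kk" using iq by linarith
        show "i + kk < \<alpha> * Suc q" using d dq by simp
      qed
      moreover have "Suc (i + kk) div \<alpha> = q + 1" using d dq apos by simp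
      ultimately have "(0, l) \<in> S" using ne' l by (simp add: S_def)
      moreover have "g (0, l) = (kk, l)" using kkv by (simp add: g_def)
      ultimately show "(kk, l) \<in> g ` S" by (metis image_eqI)
    qed
    have "card {(kk, l). kk < \<alpha> \<and> l < \<beta> \<and> state_seq E' ms' (i + kk) (j + l) \<noteq> state_seq E' ms' (i + kk + 1) (j + l)}
        \<le> card (g ` S)" using sub fS by (intro card_mono) auto
    also have "\<dots> \<le> card S" using fS by (rule card_image_le)
    finally show "card {(kk, l). kk < \<alpha> \<and> l < \<beta> \<and> state_seq E' ms' (i + kk) (j + l) \<noteq> state_seq E' ms' (i + kk + 1) (j + l)} \<le> p"
      using cS by linarith
  qed
  have sumR: "(\<Sum>i=1..x. R' i) = (\<Sum>i=1..x div \<alpha>. R i)" for x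
  proof (induction x)
    case 0 then show ?case by simp
  next
    case (Suc x)
    show ?case
    proof (cases "\<alpha> dvd Suc x")
      case True
      then show ?thesis using Suc divS[of x] by (simp add: R'_def)
    next
      case False
      then show ?thesis using Suc divS[of x] by (simp add: R'_def)
    qed
  qed
  have "has_rate R' (r / real \<alpha>)"
  proof -
    define A where "A q = (\<Sum>i=1..q. R i) / real q" for q
    have fl: "filterlim (\<lambda>x. x div \<alpha>) sequentially sequentially"
      unfolding filterlim_at_top
    proof
      fix Z :: nat
      show "\<forall>\<^sub>F x in sequentially. Z \<le> x div \<alpha>"
      proof (rule eventually_sequentiallyI[of "Z * \<alpha>"])
        fix x assume "Z * \<alpha> \<le> x"
        hence "Z * \<alpha> div \<alpha> \<le> x div \<alpha>" by (rule div_le_mono)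
        thus "Z \<le> x div \<alpha>" using apos by simp
      qed
    qed
    have L1: "(\<lambda>x. A (x div \<alpha>)) \<longlonglongrightarrow> r"
    proof -
      have LA: "A \<longlonglongrightarrow> r" using rate unfolding has_rate_def A_def[abs_def] .
      show ?thesis using filterlim_compose[OF LA fl] .
    qed
    have L2: "(\<lambda>x. real (x div \<alpha>) / real x) \<longlonglongrightarrow> 1 / real \<alpha>"
    proof (rule tendsto_sandwich[of "\<lambda>x. 1 / real \<alpha> - 1 / real x" _ _ "\<lambda>x. 1 / real \<alpha>"])
      show "\<forall>\<^sub>F x in sequentially. 1 / real \<alpha> - 1 / real x \<le> real (x div \<alpha>) / real x"
      proof (rule eventually_sequentiallyI[of 1])
        fix x :: nat assume x: "x \<ge> 1"
        have "x = \<alpha> * (x div \<alpha>) + x mod \<alpha>" by simp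
        moreover have "x mod \<alpha> < \<alpha>" using apos by simp
        ultimately have "real x \<le> real \<alpha> * real (x div \<alpha>) + real \<alpha>"
          by (metis add_le_mono le_refl less_imp_le_nat of_nat_add of_nat_le_iff of_nat_mult)
        hence "real x / real \<alpha> - 1 \<le> real (x div \<alpha>)" using apos by (simp add: field_simps)
        hence "(real x / real \<alpha> - 1) / real x \<le> real (x div \<alpha>) / real x"
          using x by (intro divide_right_mono) auto
        moreover have "(real x / real \<alpha> - 1) / real x = 1 / real \<alpha> - 1 / real x"
          using x apos by (simp add: field_simps)
        ultimately show "1 / real \<alpha> - 1 / real x \<le> real (x div \<alpha>) / real x" by simp
      qed
      show "\<forall>\<^sub>F x in sequentially. real (x div \<alpha>) / real x \<le> 1 / real \<alpha>"
      proof (rule eventually_sequentiallyI[of 1])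
        fix x :: nat assume x: "x \<ge> 1"
        have "real \<alpha> * real (x div \<alpha>) \<le> real x"
          by (metis of_nat_le_iff of_nat_mult times_div_less_eq_dividend)
        thus "real (x div \<alpha>) / real x \<le> 1 / real \<alpha>" using x apos by (simp add: field_simps)
      qed
      show "(\<lambda>x. 1 / real \<alpha> - 1 / real x) \<longlonglongrightarrow> 1 / real \<alpha>"
        using tendsto_diff[OF tendsto_const lim_1_over_n, of "1 / real \<alpha>"] by simp
      show "(\<lambda>x. 1 / real \<alpha>) \<longlonglongrightarrow> 1 / real \<alpha>" by simp
    qed
    have "(\<lambda>x. A (x div \<alpha>) * (real (x div \<alpha>) / real x)) \<longlonglongrightarrow> r * (1 / real \<alpha>)"
      by (rule tendsto_mult[OF L1 L2])
    moreover have "(\<Sum>i=1..x. R' i) / real x = A (x div \<alpha>) * (real (x div \<alpha>) / real x)" for x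
      unfolding sumR A_def by (cases "x div \<alpha> = 0") (auto simp: field_simps)
    hence "(\<lambda>x. (\<Sum>i=1..x. R' i) / real x) = (\<lambda>x. A (x div \<alpha>) * (real (x div \<alpha>) / real x))"
      by (intro ext)
    ultimately show ?thesis unfolding has_rate_def by simp
  qed
  thus ?thesis using iscode constr unfolding RS_def by blast
qed


lemma conv_from_key:
  fixes a :: "nat \<Rightarrow> real" and c :: real and \<beta> :: nat
  assumes bnd: "\<forall>n\<ge>1. 0 \<le> a n \<and> a n \<le> 2" and c0: "c \<ge> 0"
  and key: "\<forall>m N. m \<ge> 1 \<and> m \<ge> \<beta> \<and> N \<ge> m + \<beta> \<longrightarrow> a N \<ge> a m - c / real m - 2 * real m / real N"
  shows "convergent a"
proof -
  have "\<forall>x\<in>range a. \<bar>x\<bar> \<le> max 2 \<bar>a 0\<bar>"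
  proof
    fix x assume "x \<in> range a"
    then obtain n where "x = a n" by auto
    show "\<bar>x\<bar> \<le> max 2 \<bar>a 0\<bar>"
    proof (cases "n = 0")
      case True then show ?thesis using \<open>x = a n\<close> by simp
    next
      case False
      hence "0 \<le> a n \<and> a n \<le> 2" using bnd by simp
      then show ?thesis using \<open>x = a n\<close> by (simp add: le_max_iff_disj)
    qed
  qed
  hence "bounded (range a)" unfolding bounded_real by blast
  then obtain L \<phi> where sm: "strict_mono \<phi>" and lim: "(a \<circ> \<phi>) \<longlonglongrightarrow> L"
    using bounded_imp_convergent_subsequence by blast
  have big: "\<exists>N0. \<forall>N\<ge>N0. 2 * real m / real N < e" if "e > 0" for m :: nat and e :: real
  proof (intro exI allI impI)
    fix N assume N: "N \<ge> nat \<lceil>2 * real m / e\<rceil> + 1"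
    hence "real N > 2 * real m / e" by linarith
    hence "real N * e > 2 * real m" using that by (simp add: field_simps)
    moreover have "real N > 0" using N by simp
    ultimately show "2 * real m / real N < e" by (simp add: field_simps)
  qed
  have "a \<longlonglongrightarrow> L"
  proof (rule LIMSEQ_I)
    fix \<epsilon> :: real assume "0 < \<epsilon>"
    define e where "e = \<epsilon> / 3"
    have e0: "e > 0" using \<open>0 < \<epsilon>\<close> by (simp add: e_def)
    define m0 where "m0 = nat \<lceil>c / e\<rceil> + 1 + \<beta>"
    have m0: "m0 \<ge> 1" "m0 \<ge> \<beta>" by (auto simp: m0_def)
    have cm: "c / real m < e" if "m \<ge> m0" for m
    proof -
      have "real m > c / e" using that unfolding m0_def by linarith
      hence "real m * e > c" using e0 by (simp add: field_simps)
      moreover have "real m > 0" using that m0 by simp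
      ultimately show ?thesis by (simp add: field_simps)
    qed
    obtain K1 where K1: "\<forall>k\<ge>K1. \<bar>a (\<phi> k) - L\<bar> < e"
      using lim e0 unfolding LIMSEQ_def dist_real_def by (metis comp_apply)
    define k where "k = max K1 m0"
    define m where "m = \<phi> k"
    have mk: "m \<ge> m0" using seq_suble[OF sm, of k] by (simp add: m_def k_def)
    have "\<bar>a (\<phi> k) - L\<bar> < e" using K1 by (simp add: k_def)
    hence am: "a m > L - e" by (simp add: m_def abs_less_iff)
    obtain N1' where N1': "\<forall>N\<ge>N1'. 2 * real m / real N < e" using big e0 by blast
    define N1 where "N1 = max N1' (m + \<beta>)"
    have low: "a N > L - \<epsilon>" if "N \<ge> N1" for N
    proof -
      have "a N \<ge> a m - c / real m - 2 * real m / real N"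
        using key mk m0 that by (simp add: N1_def)
      moreover have "c / real m < e" using cm mk by simp
      moreover have "2 * real m / real N < e" using N1' that by (simp add: N1_def)
      ultimately show ?thesis using am by (simp add: e_def)
    qed
    have "\<exists>N2. \<forall>N\<ge>N2. a N < L + \<epsilon>"
    proof (rule ccontr)
      assume "\<not> ?thesis"
      then obtain m' where m'1: "m' \<ge> m0" and m'2: "a m' \<ge> L + \<epsilon>"
        by (meson not_le)
      obtain N3' where N3': "\<forall>N\<ge>N3'. 2 * real m' / real N < e" using big e0 by blast
      define N3 where "N3 = max N3' (m' + \<beta>)"
      define k' where "k' = max K1 N3"
      have "\<phi> k' \<ge> N3" using seq_suble[OF sm, of k'] by (simp add: k'_def)
      hence "a (\<phi> k') \<ge> a m' - c / real m' - 2 * real m' / real (\<phi> k')"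
        using key m'1 m0 by (simp add: N3_def)
      moreover have "c / real m' < e" using cm m'1 by simp
      moreover have "2 * real m' / real (\<phi> k') < e" using N3' \<open>\<phi> k' \<ge> N3\<close> by (simp add: N3_def)
      moreover have "\<bar>a (\<phi> k') - L\<bar> < e" using K1 by (simp add: k'_def)
      ultimately show False using m'2 unfolding e_def abs_less_iff by linarith
    qed
    then obtain N2 where N2: "\<forall>N\<ge>N2. a N < L + \<epsilon>" by blast
    show "\<exists>no. \<forall>n\<ge>no. norm (a n - L) < \<epsilon>"
    proof (intro exI allI impI)
      fix n assume "n \<ge> max N1 N2"
      thus "norm (a n - L) < \<epsilon>" using low N2 by fastforce
    qed
  qed
  thus ?thesis by (rule convergentI)
qed


lemma Cn_conv:
  assumes b1: "\<beta> \<ge> 1"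
  shows "convergent (Cn \<alpha> \<beta> p)"
proof (rule conv_from_key[of _ "real (2 * \<beta> + 1)" \<beta>])
  show "\<forall>n\<ge>1. 0 \<le> Cn \<alpha> \<beta> p n \<and> Cn \<alpha> \<beta> p n \<le> 2" using Cn_bounds by blast
  show "0 \<le> real (2 * \<beta> + 1)" by simp
  show "\<forall>m N. 1 \<le> m \<and> \<beta> \<le> m \<and> m + \<beta> \<le> N \<longrightarrow>
      Cn \<alpha> \<beta> p m - real (2 * \<beta> + 1) / real m - 2 * real m / real N \<le> Cn \<alpha> \<beta> p N"
    using key_ineq b1 by blast
qed

lemma stride_ineq:
  assumes b1: "\<beta> \<ge> 1" and n1: "n \<ge> 1"
  shows "Cn \<alpha> 1 p n / real \<beta> \<le> Cn \<alpha> \<beta> p (\<beta> * n)"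
proof -
  have bn: "\<beta> * n \<ge> 1" using b1 n1 by simp
  have "Cn \<alpha> 1 p n \<le> real \<beta> * Cn \<alpha> \<beta> p (\<beta> * n)"
  proof (rule Cn_le)
    fix r assume "r \<in> RS \<alpha> 1 p n"
    then obtain R E D where c: "is_code n R E D" "constrained n \<alpha> 1 p R E" "has_rate R r"
      by (auto simp: RS_def)
    have "r / real \<beta> \<le> Cn \<alpha> \<beta> p (\<beta> * n)"
      by (rule Cn_ge[OF stride_code[OF c b1] bn])
    thus "r \<le> real \<beta> * Cn \<alpha> \<beta> p (\<beta> * n)" using b1 by (simp add: field_simps)
  qed
  thus ?thesis using b1 by (simp add: field_simps)
qed

lemma stretch_ineq:
  assumes a1: "\<alpha> \<ge> 1" and n1: "n \<ge> 1"
  shows "Cn 1 \<beta> p n / real \<alpha> \<le> Cn \<alpha> \<beta> p n"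
proof -
  have "Cn 1 \<beta> p n \<le> real \<alpha> * Cn \<alpha> \<beta> p n"
  proof (rule Cn_le)
    fix r assume "r \<in> RS 1 \<beta> p n"
    then obtain R E D where c: "is_code n R E D" "constrained n 1 \<beta> p R E" "has_rate R r"
      by (auto simp: RS_def)
    have "r / real \<alpha> \<le> Cn \<alpha> \<beta> p n"
      by (rule Cn_ge[OF stretch_code[OF c a1] n1])
    thus "r \<le> real \<alpha> * Cn \<alpha> \<beta> p n" using a1 by (simp add: field_simps)
  qed
  thus ?thesis using a1 by (simp add: field_simps)
qed

theorem theorem8:
  fixes \<alpha> \<beta> p :: nat
  assumes "\<alpha> > 0" and "\<beta> > 0" and "p > 0"
  shows "Ccap \<alpha> \<beta> p \<ge> max (Ccap \<alpha> 1 p / real \<beta>) (Ccap 1 \<beta> p / real \<alpha>)"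
proof -
  have a1: "\<alpha> \<ge> 1" and b1: "\<beta> \<ge> 1" using assms by auto
  have LA: "Cn \<alpha> \<beta> p \<longlonglongrightarrow> Ccap \<alpha> \<beta> p"
    using Cn_conv[OF b1] unfolding Ccap_def convergent_LIMSEQ_iff .
  have LB: "Cn \<alpha> 1 p \<longlonglongrightarrow> Ccap \<alpha> 1 p"
    using Cn_conv[of 1] unfolding Ccap_def convergent_LIMSEQ_iff by simp
  have LC: "Cn 1 \<beta> p \<longlonglongrightarrow> Ccap 1 \<beta> p"
    using Cn_conv[OF b1] unfolding Ccap_def convergent_LIMSEQ_iff .
  have fl: "filterlim (\<lambda>n. \<beta> * n) sequentially sequentially"
    unfolding filterlim_at_top
  proof
    fix Z :: nat
    show "\<forall>\<^sub>F x in sequentially. Z \<le> \<beta> * x"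
    proof (rule eventually_sequentiallyI[of Z])
      fix x assume "Z \<le> x"
      thus "Z \<le> \<beta> * x" using b1 by (metis le_trans mult_le_mono1 mult_1)
    qed
  qed
  have LA': "(\<lambda>n. Cn \<alpha> \<beta> p (\<beta> * n)) \<longlonglongrightarrow> Ccap \<alpha> \<beta> p"
    using filterlim_compose[OF LA fl] .
  have LB': "(\<lambda>n. Cn \<alpha> 1 p n / real \<beta>) \<longlonglongrightarrow> Ccap \<alpha> 1 p / real \<beta>"
    by (rule tendsto_divide[OF LB tendsto_const]) (use b1 in simp)
  have LC': "(\<lambda>n. Cn 1 \<beta> p n / real \<alpha>) \<longlonglongrightarrow> Ccap 1 \<beta> p / real \<alpha>"
    by (rule tendsto_divide[OF LC tendsto_const]) (use a1 in simp)
  have i1: "Ccap \<alpha> 1 p / real \<beta> \<le> Ccap \<alpha> \<beta> p"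
    by (rule LIMSEQ_le[OF LB' LA']) (use stride_ineq[OF b1] in blast)
  have i2: "Ccap 1 \<beta> p / real \<alpha> \<le> Ccap \<alpha> \<beta> p"
    by (rule LIMSEQ_le[OF LC' LA]) (use stretch_ineq[OF a1] in blast)
  show ?thesis using i1 i2 by simp
qed

end
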